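(* An $r$-partite partition $\boldsymbol{\lambda}=(\lambda^0\mid\lambda^1\mid\cdots\mid\lambda^{r-1})$ of size $n$ is the cycle type of a square element of $G(r,1,n)$ (i.e. an element of the form $\pi^2$ with $\pi\in G(r,1,n)$) if and only if: (1) each even part in each partition $\lambda^t$ has even multiplicity; and (2) when $r$ is even, the odd parts of $\lambda^1,\lambda^3,\dots,\lambda^{r-1}$ have even multiplicity.
   Context: Let $\mathbb{Z}_r=\{\overline0,\dots,\overline{r-1}\}$. The generalized symmetric group is $G(r,1,n)=\{(z_1,\dots,z_n;\sigma): z_i\in\mathbb{Z}_r,\sigma\in S_n\}$ with product $(z_1,\dots,z_n;\sigma)(z'_1,\dots,z'_n;\sigma')=(z_1+z'_{\sigma^{-1}(1)},\dots,z_n+z'_{\sigma^{-1}(n)};\sigma\sigma')$. For $\pi=(z_1,\dots,z_n;\sigma)$ and a cycle $(u_1,\dots,u_\ell)$ of $\sigma$, its color is $z_{u_1}+\cdots+z_{u_\ell}\in\mathbb{Z}_r$. The cycle type of $\pi$ is the $r$-partite partition $(\lambda^0\mid\cdots\mid\lambda^{r-1})$ where $\lambda^j$ is the partition of the lengths of the cycles of $\sigma$ of color $j$; the sizes sum to $n$. Two elements are conjugate iff they have the same cycle type. *)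

theory Defs
  imports "HOL-Combinatorics.Permutations" "HOL-Library.Multiset"
begin

text \<open>Elements of G(r,1,n) are pairs (z, sigma): positions are 0..n-1 (instead of 1..n),
  z assigns to each position a colour in {0..r-1} (representing Z_r), extensionally 0 outside,
  and sigma is a permutation of {0..n-1}.\<close>

definition gsym :: "nat \<Rightarrow> nat \<Rightarrow> ((nat \<Rightarrow> nat) \<times> (nat \<Rightarrow> nat)) set" where
  "gsym r n = {(z, \<sigma>). (\<forall>i<n. z i < r) \<and> (\<forall>i\<ge>n. z i = 0) \<and> \<sigma> permutes {..<n}}"

definition gmult :: "nat \<Rightarrow> nat \<Rightarrow> ((nat \<Rightarrow> nat) \<times> (nat \<Rightarrow> nat)) \<Rightarrow> ((nat \<Rightarrow> nat) \<times> (nat \<Rightarrow> nat))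
     \<Rightarrow> ((nat \<Rightarrow> nat) \<times> (nat \<Rightarrow> nat))" where
  "gmult r n p q = (\<lambda>i. if i < n then (fst p i + fst q (inv (snd p) i)) mod r else 0,
                    snd p \<circ> snd q)"

definition perm_cycles :: "nat \<Rightarrow> (nat \<Rightarrow> nat) \<Rightarrow> nat set set" where
  "perm_cycles n \<sigma> = (\<lambda>i. {(\<sigma> ^^ k) i | k. True}) ` {..<n}"

definition cycle_color :: "nat \<Rightarrow> (nat \<Rightarrow> nat) \<Rightarrow> nat set \<Rightarrow> nat" where
  "cycle_color r z C = (\<Sum>i\<in>C. z i) mod r"

definition cycle_type :: "nat \<Rightarrow> nat \<Rightarrow> ((nat \<Rightarrow> nat) \<times> (nat \<Rightarrow> nat)) \<Rightarrow> nat \<Rightarrow> nat multiset" where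
  "cycle_type r n p j =
     image_mset card (mset_set {C \<in> perm_cycles n (snd p). cycle_color r (fst p) C = j})"

definition r_partite_partition :: "nat \<Rightarrow> nat \<Rightarrow> (nat \<Rightarrow> nat multiset) \<Rightarrow> bool" where
  "r_partite_partition r n lam \<longleftrightarrow> (\<forall>t<r. 0 \<notin># lam t) \<and> (\<Sum>t<r. sum_mset (lam t)) = n"

end

theory Submission
  imports Defs "HOL-Combinatorics.Orbits"
begin

definition orb :: "('a \<Rightarrow> 'a) \<Rightarrow> 'a \<Rightarrow> 'a set" where
  "orb f x = {(f ^^ k) x | k. True}"

lemma orb_orbit: "permutation f \<Longrightarrow> orb f x = orbit f x"
  unfolding orb_def by (simp add: orbit_altdef_permutation)

lemma self_in_orb: "x \<in> orb f x"
  unfolding orb_def by (auto intro: exI[of _ 0])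

lemma funpow_in_orb: "(f ^^ k) x \<in> orb f x"
  unfolding orb_def by auto

lemma orb_same: assumes "permutation f" "y \<in> orb f x" shows "orb f y = orb f x"
proof -
  have a: "x \<in> orbit f x" "y \<in> orbit f x" using assms
    by (auto simp: orb_orbit[symmetric] self_in_orb)
  have "x \<in> orbit f y" using orbit_swap[OF a] .
  then show ?thesis using assms a
    by (auto simp: orb_orbit intro: orbit_trans)
qed

lemma orb_disj: assumes "permutation f" "orb f x \<noteq> orb f y" shows "orb f x \<inter> orb f y = {}"
  using orb_same[OF assms(1)] assms(2) by blast

definition periodic :: "('a \<Rightarrow> 'a) \<Rightarrow> 'a \<Rightarrow> nat \<Rightarrow> bool" where
  "periodic f x p \<longleftrightarrow> p > 0 \<and> (f ^^ p) x = x \<and> inj_on (\<lambda>k. (f ^^ k) x) {..<p}"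

lemma periodic_exists: assumes "permutation f" shows "periodic f x (card (orb f x))"
proof -
  have xo: "x \<in> orbit f x" by (simp add: assms permutation_self_in_orbit)
  have e: "orbit f x = (\<lambda>n. (f ^^ n) x) ` {0..<funpow_dist1 f x x}"
    using orbit_conv_funpow_dist1[OF xo] .
  have i: "inj_on (\<lambda>n. (f ^^ n) x) {0..<funpow_dist1 f x x}"
    using inj_on_funpow_dist1[OF xo] .
  have c: "card (orb f x) = funpow_dist1 f x x"
    using e i by (simp add: orb_orbit[OF assms] card_image)
  show ?thesis unfolding periodic_def c
    using funpow_dist1_prop[OF xo] i by (auto simp: atLeast0LessThan)
qed

lemma periodic_mod: "periodic f x p \<Longrightarrow> (f ^^ k) x = (f ^^ (k mod p)) x"
  unfolding periodic_def by (simp add: funpow_mod_eq)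

lemma periodic_eq_iff: assumes "periodic f x p"
  shows "(f ^^ a) x = (f ^^ b) x \<longleftrightarrow> a mod p = b mod p"
proof
  assume "(f ^^ a) x = (f ^^ b) x"
  then have "(f ^^ (a mod p)) x = (f ^^ (b mod p)) x"
    using periodic_mod[OF assms] by metis
  moreover have "a mod p < p" "b mod p < p" using assms by (auto simp: periodic_def)
  ultimately show "a mod p = b mod p" using assms unfolding periodic_def
    by (meson inj_onD lessThan_iff)
next
  assume "a mod p = b mod p" then show "(f ^^ a) x = (f ^^ b) x"
    using periodic_mod[OF assms] by metis
qed

lemma periodic_orb: assumes "periodic f x p" shows "orb f x = (\<lambda>k. (f ^^ k) x) ` {..<p}"
proof
  have p: "p > 0" using assms by (simp add: periodic_def)
  show "orb f x \<subseteq> (\<lambda>k. (f ^^ k) x) ` {..<p}"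
  proof
    fix w assume "w \<in> orb f x"
    then obtain k where k: "w = (f ^^ k) x" by (auto simp: orb_def)
    then have "w = (f ^^ (k mod p)) x" using periodic_mod[OF assms] by simp
    moreover have "k mod p \<in> {..<p}" using p by simp
    ultimately show "w \<in> (\<lambda>k. (f ^^ k) x) ` {..<p}" by (rule image_eqI)
  qed
  show "(\<lambda>k. (f ^^ k) x) ` {..<p} \<subseteq> orb f x" by (auto simp: orb_def)
qed

lemma periodic_card: assumes "periodic f x p" shows "card (orb f x) = p"
  using periodic_orb[OF assms] assms by (simp add: periodic_def card_image)

lemma orb_image: assumes "periodic f x p" shows "f ` orb f x = orb f x"
proof
  show "f ` orb f x \<subseteq> orb f x" unfolding orb_def
    by auto (metis funpow.simps(2) o_apply)
next
  show "orb f x \<subseteq> f ` orb f x"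
  proof
    fix w assume "w \<in> orb f x"
    then obtain k where k: "w = (f ^^ k) x" by (auto simp: orb_def)
    have p: "p > 0" using assms by (simp add: periodic_def)
    have "w = (f ^^ (k + p)) x" using k periodic_mod[OF assms] by (metis mod_add_self2)
    also have "\<dots> = f ((f ^^ (k + p - 1)) x)" using p
      by (cases p) simp_all
    finally show "w \<in> f ` orb f x" by (metis image_eqI funpow_in_orb)
  qed
qed

lemma funpow_sq: "(f \<circ> f) ^^ k = f ^^ (2 * k)"
  by (induction k) (simp_all add: comp_assoc)

lemma orb_sq: "orb (f \<circ> f) y = {(f ^^ (2 * k)) y | k. True}"
  unfolding orb_def funpow_sq ..

lemma orb_sq_odd: assumes "periodic f y p" "odd p" shows "orb (f \<circ> f) y = orb f y"
proof
  show "orb (f \<circ> f) y \<subseteq> orb f y"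
  proof
    fix w assume "w \<in> orb (f \<circ> f) y"
    then obtain k where "w = (f ^^ (2 * k)) y" unfolding orb_sq by blast
    then show "w \<in> orb f y" by (simp add: funpow_in_orb)
  qed
next
  show "orb f y \<subseteq> orb (f \<circ> f) y"
  proof
    fix w assume "w \<in> orb f y"
    then obtain k where k: "w = (f ^^ k) y" unfolding orb_def by blast
    have "k * (p + 1) = k + p * k" by (simp add: algebra_simps)
    then have "(k * (p + 1)) mod p = k mod p" by simp
    then have w: "w = (f ^^ (k * (p + 1))) y"
      using k periodic_eq_iff[OF assms(1), of "k * (p + 1)" k] by simp
    have e: "even (k * (p + 1))" using assms(2) by simp
    have "k * (p + 1) = 2 * (k * (p + 1) div 2)" using e by simp
    then have "w = (f ^^ (2 * (k * (p + 1) div 2))) y" using w by simp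
    then show "w \<in> orb (f \<circ> f) y" unfolding orb_sq by blast
  qed
qed

lemma mod_2q_even: "q > 0 \<Longrightarrow> (2 * k) mod (2 * q) = 2 * (k mod (q::nat))"
  by (rule mult_mod_right[symmetric])

lemma mod_2q_odd: "q > 0 \<Longrightarrow> (2 * k + 1) mod (2 * q) = 2 * (k mod (q::nat)) + 1"
proof -
  have "(2 * k + 1) mod (2 * q) = 2 * ((2 * k + 1) div 2 mod q) + (2 * k + 1) mod 2"
    by (rule mod_mult2_eq)
  then show ?thesis by simp
qed

lemma orb_sq_fy: "orb (f \<circ> f) (f y) = {(f ^^ (2 * k + 1)) y | k. True}"
proof -
  have "\<And>k. (f ^^ (2 * k)) (f y) = (f ^^ (2 * k + 1)) y" by (simp add: funpow_swap1)
  then show ?thesis unfolding orb_sq by simp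
qed

context
  fixes f :: "'a \<Rightarrow> 'a" and y :: 'a and p q :: nat
  assumes per: "periodic f y p" and pq: "p = 2 * q"
begin

lemma q_pos: "q > 0" using per pq by (simp add: periodic_def)

lemma sqA: "orb (f \<circ> f) y = (\<lambda>m. (f ^^ (2 * m)) y) ` {..<q}"
proof
  show "orb (f \<circ> f) y \<subseteq> (\<lambda>m. (f ^^ (2 * m)) y) ` {..<q}"
  proof
    fix w assume "w \<in> orb (f \<circ> f) y"
    then obtain k where "w = (f ^^ (2 * k)) y" unfolding orb_sq by blast
    then have "w = (f ^^ (2 * (k mod q))) y"
      using periodic_mod[OF per, of "2 * k"] pq mod_2q_even[OF q_pos] by simp
    moreover have "k mod q \<in> {..<q}" using q_pos by simp
    ultimately show "w \<in> (\<lambda>m. (f ^^ (2 * m)) y) ` {..<q}" by (rule image_eqI)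
  qed
  show "(\<lambda>m. (f ^^ (2 * m)) y) ` {..<q} \<subseteq> orb (f \<circ> f) y" unfolding orb_sq by blast
qed

lemma sqB: "orb (f \<circ> f) (f y) = (\<lambda>m. (f ^^ (2 * m + 1)) y) ` {..<q}"
proof
  show "orb (f \<circ> f) (f y) \<subseteq> (\<lambda>m. (f ^^ (2 * m + 1)) y) ` {..<q}"
  proof
    fix w assume "w \<in> orb (f \<circ> f) (f y)"
    then obtain k where "w = (f ^^ (2 * k + 1)) y" unfolding orb_sq_fy by blast
    then have "w = (f ^^ (2 * (k mod q) + 1)) y"
      using periodic_mod[OF per, of "2 * k + 1"] pq mod_2q_odd[OF q_pos] by simp
    moreover have "k mod q \<in> {..<q}" using q_pos by simp
    ultimately show "w \<in> (\<lambda>m. (f ^^ (2 * m + 1)) y) ` {..<q}" by (rule image_eqI)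
  qed
  show "(\<lambda>m. (f ^^ (2 * m + 1)) y) ` {..<q} \<subseteq> orb (f \<circ> f) (f y)" unfolding orb_sq_fy by blast
qed

lemma card_sqA: "card (orb (f \<circ> f) y) = q"
proof -
  have "inj_on (\<lambda>m. (f ^^ (2 * m)) y) {..<q}"
  proof (rule inj_onI)
    fix a b assume a: "a \<in> {..<q}" and b: "b \<in> {..<q}" and e: "(f ^^ (2 * a)) y = (f ^^ (2 * b)) y"
    then have "(2 * a) mod p = (2 * b) mod p" using periodic_eq_iff[OF per] by blast
    moreover have "2 * a < p" "2 * b < p" using a b pq by auto
    ultimately show "a = b" by simp
  qed
  then show ?thesis unfolding sqA by (simp add: card_image)
qed

lemma card_sqB: "card (orb (f \<circ> f) (f y)) = q"
proof -
  have "inj_on (\<lambda>m. (f ^^ (2 * m + 1)) y) {..<q}"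
  proof (rule inj_onI)
    fix a b assume a: "a \<in> {..<q}" and b: "b \<in> {..<q}" and e: "(f ^^ (2 * a + 1)) y = (f ^^ (2 * b + 1)) y"
    then have "(2 * a + 1) mod p = (2 * b + 1) mod p" using periodic_eq_iff[OF per] by blast
    moreover have "2 * a + 1 < p" "2 * b + 1 < p" using a b pq by auto
    ultimately show "a = b" by simp
  qed
  then show ?thesis unfolding sqB by (simp add: card_image)
qed

lemma sqAB_disj: "orb (f \<circ> f) y \<inter> orb (f \<circ> f) (f y) = {}"
proof -
  { fix a b assume e: "(f ^^ (2 * a)) y = (f ^^ (2 * b + 1)) y"
    then have "(2 * a) mod p = (2 * b + 1) mod p" using periodic_eq_iff[OF per] by blast
    then have "2 * (a mod q) = 2 * (b mod q) + 1"
      using pq mod_2q_even[OF q_pos] mod_2q_odd[OF q_pos] by simp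
    then have "(2 * (a mod q)) mod 2 = (2 * (b mod q) + 1) mod 2" by simp
    then have False by simp }
  then show ?thesis unfolding orb_sq_fy orb_sq by blast
qed

lemma sqAB_Un: "orb (f \<circ> f) y \<union> orb (f \<circ> f) (f y) = orb f y"
proof
  show "orb (f \<circ> f) y \<union> orb (f \<circ> f) (f y) \<subseteq> orb f y"
  proof
    fix w assume "w \<in> orb (f \<circ> f) y \<union> orb (f \<circ> f) (f y)"
    then obtain j where "w = (f ^^ j) y" unfolding orb_sq_fy orb_sq by blast
    then show "w \<in> orb f y" using funpow_in_orb by metis
  qed
  show "orb f y \<subseteq> orb (f \<circ> f) y \<union> orb (f \<circ> f) (f y)"
  proof
    fix w assume "w \<in> orb f y"
    then obtain k where k: "w = (f ^^ k) y" unfolding orb_def by blast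
    show "w \<in> orb (f \<circ> f) y \<union> orb (f \<circ> f) (f y)"
    proof (cases "even k")
      case True
      then have "k = 2 * (k div 2)" by simp
      then have "w = (f ^^ (2 * (k div 2))) y" using k by simp
      then show ?thesis unfolding orb_sq by blast
    next
      case False
      then have "k = 2 * (k div 2) + 1" by simp
      then have "w = (f ^^ (2 * (k div 2) + 1)) y" using k by simp
      then show ?thesis unfolding orb_sq_fy by blast
    qed
  qed
qed

lemma sqB_image: "f ` orb (f \<circ> f) (f y) = orb (f \<circ> f) y"
proof
  show "f ` orb (f \<circ> f) (f y) \<subseteq> orb (f \<circ> f) y"
  proof
    fix w assume "w \<in> f ` orb (f \<circ> f) (f y)"
    then obtain k where "w = f ((f ^^ (2 * k + 1)) y)" unfolding orb_sq_fy by blast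
    then have "w = (f ^^ (2 * (k + 1))) y" by simp
    then show "w \<in> orb (f \<circ> f) y" unfolding orb_sq by blast
  qed
  show "orb (f \<circ> f) y \<subseteq> f ` orb (f \<circ> f) (f y)"
  proof
    fix w assume "w \<in> orb (f \<circ> f) y"
    then obtain m where m: "w = (f ^^ (2 * m)) y" unfolding orb_sq by blast
    have "(2 * m + p) mod p = (2 * m) mod p" by simp
    then have "w = (f ^^ (2 * m + p)) y" using m periodic_eq_iff[OF per, of "2 * m + p" "2 * m"] by simp
    also have "2 * m + p = Suc (2 * (m + q - 1) + 1)" using pq q_pos by simp
    finally have "w = f ((f ^^ (2 * (m + q - 1) + 1)) y)" by simp
    then show "w \<in> f ` orb (f \<circ> f) (f y)" unfolding orb_sq_fy by blast
  qed
qed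

end

definition CT :: "nat \<Rightarrow> nat \<Rightarrow> ((nat \<Rightarrow> nat) \<times> (nat \<Rightarrow> nat)) \<Rightarrow> (nat \<times> nat) multiset" where
  "CT r n p = image_mset (\<lambda>C. (card C, cycle_color r (fst p) C)) (mset_set (perm_cycles n (snd p)))"

definition sqf :: "nat \<Rightarrow> nat \<times> nat \<Rightarrow> (nat \<times> nat) multiset" where
  "sqf r x = (if odd (fst x) then {#(fst x, (2 * snd x) mod r)#}
              else {#(fst x div 2, snd x), (fst x div 2, snd x)#})"

lemma perm_cycles_orb: "perm_cycles n \<sigma> = orb \<sigma> ` {..<n}"
  unfolding perm_cycles_def orb_def by (rule refl)

lemma funpow_permutes_in: "\<sigma> permutes S \<Longrightarrow> x \<in> S \<Longrightarrow> (\<sigma> ^^ k) x \<in> S"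
proof (induction k)
  case 0 then show ?case by simp
next
  case (Suc k)
  then have "(\<sigma> ^^ k) x \<in> S" by simp
  then have "\<sigma> ((\<sigma> ^^ k) x) \<in> S" using permutes_in_image[OF Suc.prems(1)] by simp
  then show ?case by simp
qed

lemma orb_sub: assumes "\<sigma> permutes S" "x \<in> S" shows "orb \<sigma> x \<subseteq> S"
proof
  fix w assume "w \<in> orb \<sigma> x"
  then obtain k where "w = (\<sigma> ^^ k) x" unfolding orb_def by blast
  then show "w \<in> S" using funpow_permutes_in[OF assms] by simp
qed

lemma orb_sq_sub: "orb (f \<circ> f) x \<subseteq> orb f x"
proof
  fix w assume "w \<in> orb (f \<circ> f) x"
  then obtain k where "w = (f ^^ (2 * k)) x" unfolding orb_sq by blast
  then show "w \<in> orb f x" by (simp add: funpow_in_orb)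
qed

lemma mset_set_UN_image:
  assumes "finite A" "\<forall>a\<in>A. finite (S a)" "\<forall>a\<in>A. \<forall>b\<in>A. a \<noteq> b \<longrightarrow> S a \<inter> S b = {}"
  shows "image_mset g (mset_set (\<Union>a\<in>A. S a)) = (\<Sum>a\<in>A. image_mset g (mset_set (S a)))"
  using assms
proof (induction A rule: finite_induct)
  case empty then show ?case by simp
next
  case (insert a F)
  have p1: "\<forall>b\<in>F. finite (S b)" using insert.prems(1) by simp
  have p2: "\<forall>c\<in>F. \<forall>b\<in>F. c \<noteq> b \<longrightarrow> S c \<inter> S b = {}" using insert.prems(2) by simp
  have IH: "image_mset g (mset_set (\<Union>b\<in>F. S b)) = (\<Sum>b\<in>F. image_mset g (mset_set (S b)))"
    by (rule insert.IH[OF p1 p2])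
  have "\<forall>b\<in>F. S a \<inter> S b = {}" using insert.prems(2) insert.hyps(2) by auto
  then have d: "S a \<inter> (\<Union>b\<in>F. S b) = {}" by blast
  have f: "finite (\<Union>b\<in>F. S b)" using p1 insert.hyps(1) by blast
  have fa: "finite (S a)" using insert.prems(1) by simp
  have u: "(\<Union>b\<in>insert a F. S b) = S a \<union> (\<Union>b\<in>F. S b)" by blast
  have "image_mset g (mset_set (\<Union>b\<in>insert a F. S b))
      = image_mset g (mset_set (S a) + mset_set (\<Union>b\<in>F. S b))"
    unfolding u by (subst mset_set_Union[OF fa f d]) (rule refl)
  also have "\<dots> = image_mset g (mset_set (S a)) + (\<Sum>b\<in>F. image_mset g (mset_set (S b)))"
    by (simp only: image_mset_union IH)
  also have "\<dots> = (\<Sum>b\<in>insert a F. image_mset g (mset_set (S b)))"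
    by (rule sum.insert[symmetric, OF insert.hyps])
  finally show ?case .
qed

lemma color_sq:
  assumes "D \<subseteq> {..<n}" "finite D"
  shows "cycle_color r (\<lambda>i. if i < n then (z i + z (inv \<sigma> i)) mod r else 0) D
       = (sum z D + (\<Sum>i\<in>D. z (inv \<sigma> i))) mod r"
proof -
  have "cycle_color r (\<lambda>i. if i < n then (z i + z (inv \<sigma> i)) mod r else 0) D
      = (\<Sum>i\<in>D. (z i + z (inv \<sigma> i)) mod r) mod r"
    unfolding cycle_color_def using assms(1) by (intro arg_cong[where f="\<lambda>x. x mod r"] sum.cong) auto
  also have "\<dots> = (\<Sum>i\<in>D. z i + z (inv \<sigma> i)) mod r" by (rule mod_sum_eq)
  also have "\<dots> = (sum z D + (\<Sum>i\<in>D. z (inv \<sigma> i))) mod r" by (simp add: sum.distrib)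
  finally show ?thesis .
qed

lemma sum_inv_image:
  assumes "\<sigma> permutes S" "D = \<sigma> ` E"
  shows "(\<Sum>i\<in>D. z (inv \<sigma> i)) = sum z E"
proof -
  have "inj_on \<sigma> E" using permutes_inj[OF assms(1)] by (meson inj_on_subset subset_UNIV)
  then have "(\<Sum>i\<in>D. z (inv \<sigma> i)) = (\<Sum>j\<in>E. z (inv \<sigma> (\<sigma> j)))"
    unfolding assms(2) by (simp add: sum.reindex)
  also have "\<dots> = sum z E" using permutes_inverses(2)[OF assms(1)] by simp
  finally show ?thesis .
qed

context
  fixes r n :: nat and z \<sigma> :: "nat \<Rightarrow> nat"
  assumes sp: "\<sigma> permutes {..<n}"
begin

lemma perm_s: "permutation \<sigma>" using sp permutation_permutes by blast

lemma perm_ss: "permutation (\<sigma> \<circ> \<sigma>)" using perm_s permutation_compose by blast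

lemma cycle_sq:
  assumes y: "y < n" and C_def: "C = orb \<sigma> y"
    and z2_def: "z2 = (\<lambda>i. if i < n then (z i + z (inv \<sigma> i)) mod r else 0)"
  shows "image_mset (\<lambda>D. (card D, cycle_color r z2 D)) (mset_set (orb (\<sigma> \<circ> \<sigma>) ` C))
         = sqf r (card C, sum z C mod r)"
proof -
  define p where "p = card C"
  have per: "periodic \<sigma> y p" unfolding p_def C_def by (rule periodic_exists[OF perm_s])
  have Csub: "C \<subseteq> {..<n}" unfolding C_def using orb_sub[OF sp] y by simp
  have finC: "finite C" using Csub finite_subset by blast
  have yC: "y \<in> C" unfolding C_def by (rule self_in_orb)
  have imC: "\<sigma> ` C = C" unfolding C_def by (rule orb_image[OF per])
  show ?thesis
  proof (cases "odd p")
    case True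
    have AC: "orb (\<sigma> \<circ> \<sigma>) y = C" unfolding C_def by (rule orb_sq_odd[OF per True])
    have "orb (\<sigma> \<circ> \<sigma>) ` C = {C}"
    proof -
      have "\<forall>w\<in>C. orb (\<sigma> \<circ> \<sigma>) w = C"
      proof
        fix w assume "w \<in> C"
        then have "w \<in> orb (\<sigma> \<circ> \<sigma>) y" using AC by simp
        then have "orb (\<sigma> \<circ> \<sigma>) w = orb (\<sigma> \<circ> \<sigma>) y" by (rule orb_same[OF perm_ss])
        then show "orb (\<sigma> \<circ> \<sigma>) w = C" using AC by simp
      qed
      then show ?thesis using yC by blast
    qed
    then have L: "image_mset (\<lambda>D. (card D, cycle_color r z2 D)) (mset_set (orb (\<sigma> \<circ> \<sigma>) ` C))
         = {#(p, cycle_color r z2 C)#}" by (simp add: p_def)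
    have "cycle_color r z2 C = (sum z C + sum z C) mod r"
      unfolding z2_def using color_sq[OF Csub finC, where r=r and z=z and \<sigma>=\<sigma>]
        sum_inv_image[OF sp imC[symmetric], of z] by simp
    also have "(sum z C + sum z C) mod r = (2 * (sum z C mod r)) mod r"
      by (simp add: mod_add_eq mult_2)
    finally have "cycle_color r z2 C = (2 * (sum z C mod r)) mod r" .
    moreover have "sqf r (p, sum z C mod r) = {#(p, (2 * (sum z C mod r)) mod r)#}"
      using True by (simp add: sqf_def)
    ultimately show ?thesis using L by (simp add: p_def)
  next
    case False
    define q where "q = p div 2"
    have pq: "p = 2 * q" using False q_def by simp
    define A where "A = orb (\<sigma> \<circ> \<sigma>) y"
    define B where "B = orb (\<sigma> \<circ> \<sigma>) (\<sigma> y)"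
    have cA: "card A = q" unfolding A_def by (rule card_sqA[OF per pq])
    have cB: "card B = q" unfolding B_def by (rule card_sqB[OF per pq])
    have dAB: "A \<inter> B = {}" unfolding A_def B_def by (rule sqAB_disj[OF per pq])
    have uAB: "A \<union> B = C" unfolding A_def B_def C_def by (rule sqAB_Un[OF per pq])
    have imB: "\<sigma> ` B = A" unfolding A_def B_def by (rule sqB_image[OF per pq])
    have yA: "y \<in> A" unfolding A_def by (rule self_in_orb)
    have syB: "\<sigma> y \<in> B" unfolding B_def by (rule self_in_orb)
    have AB: "A \<noteq> B" using dAB yA by blast
    have "A = C - B" using uAB dAB by blast
    then have "\<sigma> ` A = \<sigma> ` C - \<sigma> ` B"
      using permutes_inj[OF sp] by (simp add: image_set_diff)
    moreover have "C - A = B" using uAB dAB by blast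
    ultimately have imA: "\<sigma> ` A = B" using imC imB by simp
    have CAB: "orb (\<sigma> \<circ> \<sigma>) ` C = {A, B}"
    proof -
      have "\<forall>w\<in>A. orb (\<sigma> \<circ> \<sigma>) w = A" unfolding A_def using orb_same[OF perm_ss] by simp
      moreover have "\<forall>w\<in>B. orb (\<sigma> \<circ> \<sigma>) w = B" unfolding B_def using orb_same[OF perm_ss] by simp
      ultimately have "orb (\<sigma> \<circ> \<sigma>) ` A = {A}" "orb (\<sigma> \<circ> \<sigma>) ` B = {B}"
        using yA syB by blast+
      moreover have "orb (\<sigma> \<circ> \<sigma>) ` C = orb (\<sigma> \<circ> \<sigma>) ` A \<union> orb (\<sigma> \<circ> \<sigma>) ` B"
        using uAB by blast
      ultimately show ?thesis by (metis insert_is_Un)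
    qed
    have L: "image_mset (\<lambda>D. (card D, cycle_color r z2 D)) (mset_set (orb (\<sigma> \<circ> \<sigma>) ` C))
         = {#(q, cycle_color r z2 A), (q, cycle_color r z2 B)#}"
    proof -
      have "mset_set {A, B} = {#A, B#}" using AB by simp
      then show ?thesis using \<open>orb (\<sigma> \<circ> \<sigma>) ` C = {A, B}\<close> cA cB by simp
    qed
    have finA: "finite A" "finite B" using uAB finC by auto
    have "sum z (A \<union> B) = sum z A + sum z B" by (rule sum.union_disjoint[OF finA dAB])
    then have sAB: "sum z A + sum z B = sum z C" using uAB by simp
    have AsB: "A \<subseteq> {..<n}" "B \<subseteq> {..<n}" using Csub uAB by auto
    have "cycle_color r z2 A = (sum z A + sum z B) mod r"
      unfolding z2_def using color_sq[OF AsB(1) finA(1), of r z \<sigma>] sum_inv_image[OF sp imB[symmetric], of z] by simp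
    then have cA': "cycle_color r z2 A = sum z C mod r" using sAB by simp
    have "cycle_color r z2 B = (sum z B + sum z A) mod r"
      unfolding z2_def using color_sq[OF AsB(2) finA(2), of r z \<sigma>] sum_inv_image[OF sp imA[symmetric], of z] by simp
    then have cB': "cycle_color r z2 B = sum z C mod r" using sAB by (simp add: add.commute)
    have "sqf r (p, sum z C mod r) = {#(q, sum z C mod r), (q, sum z C mod r)#}"
      using False q_def by (simp add: sqf_def)
    then show ?thesis using L cA' cB' by (simp add: p_def)
  qed
qed

end

lemma CT_sq:
  assumes "\<pi> \<in> gsym r n"
  shows "CT r n (gmult r n \<pi> \<pi>) = sum_mset (image_mset (sqf r) (CT r n \<pi>))"
proof -
  obtain z \<sigma> where pi: "\<pi> = (z, \<sigma>)" by (cases \<pi>)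
  have sp: "\<sigma> permutes {..<n}" using assms pi by (simp add: gsym_def)
  define z2 where "z2 = (\<lambda>i. if i < n then (z i + z (inv \<sigma> i)) mod r else 0)"
  have gm: "gmult r n \<pi> \<pi> = (z2, \<sigma> \<circ> \<sigma>)" unfolding pi gmult_def fst_conv snd_conv z2_def by (rule refl)
  define cyc where "cyc = orb \<sigma> ` {..<n}"
  have fcyc: "finite cyc" unfolding cyc_def by (rule finite_imageI[OF finite_lessThan])
  have csub: "\<forall>C\<in>cyc. C \<subseteq> {..<n}"
  proof
    fix C assume "C \<in> cyc"
    then obtain y where "y < n" "C = orb \<sigma> y" unfolding cyc_def by blast
    then show "C \<subseteq> {..<n}" using orb_sub[OF sp] by simp
  qed
  have cfin: "\<forall>C\<in>cyc. finite (orb (\<sigma> \<circ> \<sigma>) ` C)"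
  proof
    fix C assume "C \<in> cyc"
    then have "finite C" using csub finite_subset[OF _ finite_lessThan] by blast
    then show "finite (orb (\<sigma> \<circ> \<sigma>) ` C)" by (rule finite_imageI)
  qed
  have cdisj: "\<forall>C\<in>cyc. \<forall>C'\<in>cyc. C \<noteq> C' \<longrightarrow> orb (\<sigma> \<circ> \<sigma>) ` C \<inter> orb (\<sigma> \<circ> \<sigma>) ` C' = {}"
  proof (intro ballI impI)
    fix C C' assume C: "C \<in> cyc" and C': "C' \<in> cyc" and ne: "C \<noteq> C'"
    show "orb (\<sigma> \<circ> \<sigma>) ` C \<inter> orb (\<sigma> \<circ> \<sigma>) ` C' = {}"
    proof (rule ccontr)
      assume "orb (\<sigma> \<circ> \<sigma>) ` C \<inter> orb (\<sigma> \<circ> \<sigma>) ` C' \<noteq> {}"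
      then obtain D where D1: "D \<in> orb (\<sigma> \<circ> \<sigma>) ` C" and D2: "D \<in> orb (\<sigma> \<circ> \<sigma>) ` C'"
        by blast
      from D1 obtain w where w: "w \<in> C" and ew: "D = orb (\<sigma> \<circ> \<sigma>) w" by (rule imageE) simp
      from D2 obtain w' where w': "w' \<in> C'" and ew': "D = orb (\<sigma> \<circ> \<sigma>) w'" by (rule imageE) simp
      have e: "orb (\<sigma> \<circ> \<sigma>) w = orb (\<sigma> \<circ> \<sigma>) w'" using ew ew' by simp
      from C obtain y where y: "C = orb \<sigma> y" unfolding cyc_def by (rule imageE) simp
      from C' obtain y' where y': "C' = orb \<sigma> y'" unfolding cyc_def by (rule imageE) simp
      have "w \<in> orb \<sigma> y" using w y by simp
      then have "orb \<sigma> w = orb \<sigma> y" by (rule orb_same[OF perm_s[OF sp]])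
      then have "orb \<sigma> w = C" using y by simp
      have "w \<in> orb (\<sigma> \<circ> \<sigma>) w'" using e self_in_orb[of w "\<sigma> \<circ> \<sigma>"] by simp
      then have "w \<in> orb \<sigma> w'" using orb_sq_sub[of \<sigma> w'] by (rule subsetD[rotated])
      then have "orb \<sigma> w = orb \<sigma> w'" by (rule orb_same[OF perm_s[OF sp]])
      moreover have "w' \<in> orb \<sigma> y'" using w' y' by simp
      then have "orb \<sigma> w' = orb \<sigma> y'" by (rule orb_same[OF perm_s[OF sp]])
      then have "orb \<sigma> w' = C'" using y' by simp
      ultimately show False using ne \<open>orb \<sigma> w = C\<close> by simp
    qed
  qed
  have U: "orb (\<sigma> \<circ> \<sigma>) ` {..<n} = (\<Union>C\<in>cyc. orb (\<sigma> \<circ> \<sigma>) ` C)"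
  proof
    show "orb (\<sigma> \<circ> \<sigma>) ` {..<n} \<subseteq> (\<Union>C\<in>cyc. orb (\<sigma> \<circ> \<sigma>) ` C)"
    proof
      fix D assume "D \<in> orb (\<sigma> \<circ> \<sigma>) ` {..<n}"
      then obtain i where i: "i < n" "D = orb (\<sigma> \<circ> \<sigma>) i" by blast
      have "orb \<sigma> i \<in> cyc" unfolding cyc_def using i(1) by simp
      moreover have "D \<in> orb (\<sigma> \<circ> \<sigma>) ` orb \<sigma> i" unfolding i(2) using self_in_orb[of i \<sigma>] by (rule imageI)
      ultimately show "D \<in> (\<Union>C\<in>cyc. orb (\<sigma> \<circ> \<sigma>) ` C)" by (rule UN_I)
    qed
    show "(\<Union>C\<in>cyc. orb (\<sigma> \<circ> \<sigma>) ` C) \<subseteq> orb (\<sigma> \<circ> \<sigma>) ` {..<n}"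
    proof
      fix D assume "D \<in> (\<Union>C\<in>cyc. orb (\<sigma> \<circ> \<sigma>) ` C)"
      then obtain C where C: "C \<in> cyc" "D \<in> orb (\<sigma> \<circ> \<sigma>) ` C" by (rule UN_E)
      from C(2) obtain w where w: "w \<in> C" "D = orb (\<sigma> \<circ> \<sigma>) w" by (rule imageE) simp
      have "w \<in> {..<n}" using csub C(1) w(1) by blast
      then show "D \<in> orb (\<sigma> \<circ> \<sigma>) ` {..<n}" using w(2) by simp
    qed
  qed
  define g2 where "g2 = (\<lambda>D. (card D, cycle_color r z2 D))"
  define g where "g = (\<lambda>D. (card D, cycle_color r z D))"
  have "CT r n (gmult r n \<pi> \<pi>) = image_mset g2 (mset_set (orb (\<sigma> \<circ> \<sigma>) ` {..<n}))"
    unfolding CT_def gm g2_def perm_cycles_orb fst_conv snd_conv by (rule refl)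
  also have "\<dots> = (\<Sum>C\<in>cyc. image_mset g2 (mset_set (orb (\<sigma> \<circ> \<sigma>) ` C)))"
    unfolding U by (rule mset_set_UN_image[OF fcyc cfin cdisj])
  also have "\<dots> = (\<Sum>C\<in>cyc. sqf r (g C))"
  proof (rule sum.cong[OF refl])
    fix C assume "C \<in> cyc"
    then obtain y where y: "y < n" "C = orb \<sigma> y" unfolding cyc_def by blast
    have "image_mset g2 (mset_set (orb (\<sigma> \<circ> \<sigma>) ` C)) = sqf r (card C, sum z C mod r)"
      unfolding g2_def by (rule cycle_sq[OF sp y z2_def])
    then show "image_mset g2 (mset_set (orb (\<sigma> \<circ> \<sigma>) ` C)) = sqf r (g C)"
      unfolding g_def cycle_color_def .
  qed
  also have "\<dots> = sum_mset (image_mset (sqf r \<circ> g) (mset_set cyc))"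
    by (simp only: sum_unfold_sum_mset comp_def)
  also have "\<dots> = sum_mset (image_mset (sqf r) (CT r n \<pi>))"
    unfolding CT_def pi g_def cyc_def perm_cycles_orb fst_conv snd_conv image_mset.compositionality by (rule refl)
  finally show ?thesis .
qed

definition blk :: "nat \<Rightarrow> nat \<Rightarrow> nat \<Rightarrow> nat" where
  "blk n l i = (if n \<le> i \<and> i + 1 < n + l then i + 1 else if i + 1 = n + l \<and> l > 0 then n else i)"

lemma blk_permutes: "blk n l permutes {n..<n + l}"
proof (rule bij_imp_permutes)
  show "bij_betw (blk n l) {n..<n + l} {n..<n + l}"
  proof (rule bij_betw_imageI)
    show "inj_on (blk n l) {n..<n + l}"
      by (rule inj_onI) (auto simp: blk_def split: if_splits)
    show "blk n l ` {n..<n + l} = {n..<n + l}"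
    proof
      show "blk n l ` {n..<n + l} \<subseteq> {n..<n + l}"
        by (auto simp: blk_def)
      show "{n..<n + l} \<subseteq> blk n l ` {n..<n + l}"
      proof
        fix j assume j: "j \<in> {n..<n + l}"
        show "j \<in> blk n l ` {n..<n + l}"
        proof (cases "j = n")
          case True
          then have "blk n l (n + l - 1) = j" using j by (auto simp: blk_def)
          moreover have "n + l - 1 \<in> {n..<n + l}" using j by auto
          ultimately show ?thesis by (metis imageI)
        next
          case False
          then have "blk n l (j - 1) = j" using j by (auto simp: blk_def)
          moreover have "j - 1 \<in> {n..<n + l}" using j False by auto
          ultimately show ?thesis by (metis imageI)
        qed
      qed
    qed
  qed
  show "\<And>x. x \<notin> {n..<n + l} \<Longrightarrow> blk n l x = x"
    by (auto simp: blk_def)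
qed

lemma blk_iter: assumes "l > 0" shows "(blk n l ^^ k) n = n + k mod l"
proof (induction k)
  case 0 then show ?case by simp
next
  case (Suc k)
  have "(blk n l ^^ Suc k) n = blk n l (n + k mod l)" using Suc by simp
  also have "\<dots> = n + Suc k mod l"
  proof (cases "Suc (k mod l) = l")
    case True
    then show ?thesis using assms by (simp add: blk_def mod_Suc)
  next
    case False
    moreover have "k mod l < l" using assms by simp
    ultimately show ?thesis by (simp add: blk_def mod_Suc)
  qed
  finally show ?case .
qed

lemma extend:
  assumes zs: "(z, \<sigma>) \<in> gsym r n" and l: "l > 0" and c: "c < r"
  shows "(z(n := c), blk n l \<circ> \<sigma>) \<in> gsym r (n + l)"
    and "CT r (n + l) (z(n := c), blk n l \<circ> \<sigma>) = add_mset (l, c) (CT r n (z, \<sigma>))"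
proof -
  define \<tau> where "\<tau> = blk n l \<circ> \<sigma>"
  define z' where "z' = z(n := c)"
  have sp: "\<sigma> permutes {..<n}" and zlt: "\<forall>i<n. z i < r" and z0: "\<forall>i\<ge>n. z i = 0"
    using zs by (auto simp: gsym_def)
  have sfix: "\<And>i. i \<ge> n \<Longrightarrow> \<sigma> i = i" using permutes_not_in[OF sp] by simp
  have sp': "\<sigma> permutes {..<n + l}" using permutes_subset[OF sp] by simp
  have bp': "blk n l permutes {..<n + l}" by (rule permutes_subset[OF blk_permutes]) auto
  have tp: "\<tau> permutes {..<n + l}" unfolding \<tau>_def by (rule permutes_compose[OF sp' bp'])
  have zall: "\<And>i. z i < r"
  proof -
    fix i show "z i < r"
    proof (cases "i < n")
      case True then show ?thesis using zlt by simp
    next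
      case False then show ?thesis using z0 c by simp
    qed
  qed
  have ptau: "permutation \<tau>" using tp permutation_permutes by blast
  show "(z(n := c), blk n l \<circ> \<sigma>) \<in> gsym r (n + l)"
    unfolding gsym_def using tp zall z0 c l by (auto simp: \<tau>_def)
  have blk_low: "\<And>j. j < n \<Longrightarrow> blk n l j = j" using l by (auto simp: blk_def)
  have it_low: "\<And>i k. i < n \<Longrightarrow> (\<tau> ^^ k) i = (\<sigma> ^^ k) i"
  proof -
    fix i k assume i: "i < n"
    show "(\<tau> ^^ k) i = (\<sigma> ^^ k) i"
    proof (induction k)
      case 0 then show ?case by simp
    next
      case (Suc k)
      have "(\<sigma> ^^ Suc k) i < n" using funpow_permutes_in[OF sp] i by blast
      then have "\<sigma> ((\<sigma> ^^ k) i) < n" by simp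
      then have "\<tau> ((\<sigma> ^^ k) i) = \<sigma> ((\<sigma> ^^ k) i)" unfolding \<tau>_def using blk_low by simp
      then show ?case using Suc by simp
    qed
  qed
  have orb_low: "\<And>i. i < n \<Longrightarrow> orb \<tau> i = orb \<sigma> i"
    unfolding orb_def using it_low by simp
  have it_n: "\<And>k. (\<tau> ^^ k) n = n + k mod l"
  proof -
    fix k show "(\<tau> ^^ k) n = n + k mod l"
    proof (induction k)
      case 0 then show ?case by simp
    next
      case (Suc k)
      have "(\<tau> ^^ Suc k) n = \<tau> (n + k mod l)" using Suc by simp
      also have "\<dots> = blk n l (n + k mod l)" unfolding \<tau>_def using sfix by simp
      also have "\<dots> = blk n l ((blk n l ^^ k) n)" using blk_iter[OF l] by simp
      also have "\<dots> = n + Suc k mod l" using blk_iter[OF l, where n=n and k="Suc k"] by simp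
      finally show ?case .
    qed
  qed
  define B where "B = {n..<n + l}"
  have orb_n: "orb \<tau> n = B"
  proof
    show "orb \<tau> n \<subseteq> B"
    proof
      fix w assume "w \<in> orb \<tau> n"
      then obtain k where "w = (\<tau> ^^ k) n" unfolding orb_def by blast
      then show "w \<in> B" using it_n l by (simp add: B_def)
    qed
    show "B \<subseteq> orb \<tau> n"
    proof
      fix w assume w: "w \<in> B"
      then have "w - n < l" "n \<le> w" by (auto simp: B_def)
      then have "(\<tau> ^^ (w - n)) n = w" using it_n by simp
      then show "w \<in> orb \<tau> n" using funpow_in_orb by metis
    qed
  qed
  have orb_B: "\<And>i. i \<in> B \<Longrightarrow> orb \<tau> i = B"
  proof -
    fix i assume "i \<in> B"
    then have "i \<in> orb \<tau> n" using orb_n by simp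
    then have "orb \<tau> i = orb \<tau> n" by (rule orb_same[OF ptau])
    then show "orb \<tau> i = B" using orb_n by simp
  qed
  have un: "{..<n + l} = {..<n} \<union> B" unfolding B_def by auto
  have PC: "perm_cycles (n + l) \<tau> = insert B (perm_cycles n \<sigma>)"
  proof -
    have "perm_cycles (n + l) \<tau> = orb \<tau> ` {..<n} \<union> orb \<tau> ` B"
      unfolding perm_cycles_orb un by (rule image_Un)
    moreover have "orb \<tau> ` {..<n} = perm_cycles n \<sigma>"
      unfolding perm_cycles_orb using orb_low by simp
    moreover have "orb \<tau> ` B = {B}"
    proof -
      have "n \<in> B" using l by (simp add: B_def)
      then show ?thesis using orb_B by blast
    qed
    ultimately show ?thesis by simp
  qed
  have oldsub: "\<And>C. C \<in> perm_cycles n \<sigma> \<Longrightarrow> C \<subseteq> {..<n}"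
    unfolding perm_cycles_orb using orb_sub[OF sp] by blast
  have Bnot: "B \<notin> perm_cycles n \<sigma>"
  proof
    assume "B \<in> perm_cycles n \<sigma>"
    then have "B \<subseteq> {..<n}" by (rule oldsub)
    moreover have "n \<in> B" using l by (simp add: B_def)
    ultimately show False by auto
  qed
  have finP: "finite (perm_cycles n \<sigma>)" unfolding perm_cycles_orb by simp
  have cB: "card B = l" by (simp add: B_def)
  have colB: "cycle_color r z' B = c"
  proof -
    have "(\<Sum>i\<in>B. z' i) = (\<Sum>i\<in>B. if i = n then c else 0)"
      by (rule sum.cong[OF refl]) (auto simp: z'_def B_def z0)
    also have "\<dots> = c" using l by (simp add: B_def)
    finally show ?thesis unfolding cycle_color_def using c by simp
  qed
  have colold: "\<And>C. C \<in> perm_cycles n \<sigma> \<Longrightarrow> cycle_color r z' C = cycle_color r z C"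
  proof -
    fix C assume "C \<in> perm_cycles n \<sigma>"
    then have "C \<subseteq> {..<n}" by (rule oldsub)
    then have "\<forall>i\<in>C. z' i = z i" unfolding z'_def by auto
    then show "cycle_color r z' C = cycle_color r z C" unfolding cycle_color_def by simp
  qed
  have "CT r (n + l) (z', \<tau>) = image_mset (\<lambda>C. (card C, cycle_color r z' C)) (mset_set (insert B (perm_cycles n \<sigma>)))"
    unfolding CT_def PC fst_conv snd_conv by (rule refl)
  also have "\<dots> = add_mset (l, c) (image_mset (\<lambda>C. (card C, cycle_color r z' C)) (mset_set (perm_cycles n \<sigma>)))"
    using finP Bnot cB colB by simp
  also have "image_mset (\<lambda>C. (card C, cycle_color r z' C)) (mset_set (perm_cycles n \<sigma>))
           = image_mset (\<lambda>C. (card C, cycle_color r z C)) (mset_set (perm_cycles n \<sigma>))"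
    by (rule image_mset_cong) (simp add: colold finP)
  finally show "CT r (n + l) (z(n := c), blk n l \<circ> \<sigma>) = add_mset (l, c) (CT r n (z, \<sigma>))"
    unfolding z'_def \<tau>_def CT_def fst_conv snd_conv .
qed

lemma exists_CT:
  assumes "\<forall>x\<in>#M. fst x > 0 \<and> snd x < r"
  shows "\<exists>\<pi>\<in>gsym r (sum_mset (image_mset fst M)). CT r (sum_mset (image_mset fst M)) \<pi> = M"
  using assms
proof (induction M)
  case empty
  have "((\<lambda>_. 0), id) \<in> gsym r 0" by (simp add: gsym_def permutes_id)
  moreover have "CT r 0 ((\<lambda>_. 0), id) = {#}" by (simp add: CT_def perm_cycles_def)
  ultimately show ?case by auto
next
  case (add x M)
  obtain l c where x: "x = (l, c)" by (cases x)
  have lc: "l > 0" "c < r" using add.prems x by auto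
  define n where "n = sum_mset (image_mset fst M)"
  have "\<exists>\<pi>\<in>gsym r n. CT r n \<pi> = M" unfolding n_def using add.IH add.prems by simp
  then obtain z \<sigma> where zs: "(z, \<sigma>) \<in> gsym r n" and ct: "CT r n (z, \<sigma>) = M" by auto
  have e: "sum_mset (image_mset fst (add_mset x M)) = n + l" unfolding n_def x by simp
  show ?case unfolding e using extend[OF zs lc] ct x by auto
qed

lemma count_img_filter:
  "count (image_mset card (filter_mset (\<lambda>C. h C = t) N)) k = count (image_mset (\<lambda>C. (card C, h C)) N) (k, t)"
  by (induction N) auto

lemma ct_count:
  "count (cycle_type r n p t) k = count (CT r n p) (k, t)"
proof -
  have fin: "finite (perm_cycles n (snd p))" unfolding perm_cycles_orb by simp
  have "cycle_type r n p t = image_mset card (filter_mset (\<lambda>C. cycle_color r (fst p) C = t) (mset_set (perm_cycles n (snd p))))"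
    unfolding cycle_type_def using filter_mset_mset_set[OF fin] by simp
  then show ?thesis unfolding CT_def by (simp add: count_img_filter)
qed

lemma even_mod_even: "even (r::nat) \<Longrightarrow> even (m mod r) \<longleftrightarrow> even m"
  by (metis dvd_mod_iff)

lemma sqf_count_even:
  assumes "even k \<or> (even r \<and> odd t)"
  shows "even (count (sum_mset (image_mset (sqf r) M)) (k, t))"
proof (induction M)
  case empty then show ?case by simp
next
  case (add x M)
  obtain a b where x: "x = (a, b)" by (cases x)
  have "even (count (sqf r x) (k, t))"
  proof (cases "odd a")
    case True
    then have s: "sqf r x = {#(a, (2 * b) mod r)#}" by (simp add: sqf_def x)
    show ?thesis
    proof (cases "(a, (2 * b) mod r) = (k, t)")
      case True
      then have "odd k" "t = (2 * b) mod r" using \<open>odd a\<close> by auto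
      then have "even r" "odd t" using assms by auto
      then have False using \<open>t = (2 * b) mod r\<close> even_mod_even[of r "2 * b"] by simp
      then show ?thesis ..
    next
      case False
      then show ?thesis using s by simp
    qed
  next
    case False
    then have "sqf r x = {#(a div 2, b), (a div 2, b)#}" by (simp add: sqf_def x)
    then show ?thesis by simp
  qed
  then show ?case using add.IH by simp
qed

lemma construct:
  assumes "r \<ge> 1" "\<forall>x\<in>#L. fst x > 0 \<and> snd x < r"
    "\<forall>k t. (even k \<or> (even r \<and> odd t)) \<longrightarrow> even (count L (k, t))"
  shows "\<exists>M. (\<forall>x\<in>#M. fst x > 0 \<and> snd x < r) \<and> sum_mset (image_mset (sqf r) M) = L
             \<and> sum_mset (image_mset fst M) = sum_mset (image_mset fst L)"
  using assms(2,3)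
proof (induction "size L" arbitrary: L rule: less_induct)
  case less
  show ?case
  proof (cases "L = {#}")
    case True
    then show ?thesis by (intro exI[of _ "{#}"]) simp
  next
    case False
    then obtain x where xL: "x \<in># L" by blast
    obtain k t where x: "x = (k, t)" by (cases x)
    have kt: "k > 0" "t < r" using less.prems(1) xL x by auto
    show ?thesis
    proof (cases "even k \<or> (even r \<and> odd t)")
      case True
      have ev: "even (count L x)" using less.prems(2) True x by blast
      have "count L x \<ge> 1" using xL by (simp add: Suc_le_eq)
      then have c2: "count L x \<ge> 2" using ev by presburger
      define L' where "L' = L - {#x, x#}"
      have LL: "L = add_mset x (add_mset x L')"
      proof (rule multiset_eqI)
        fix y show "count L y = count (add_mset x (add_mset x L')) y"
          using c2 by (auto simp: L'_def)
      qed
      have sz: "size L' < size L" unfolding LL by simp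
      have p1: "\<forall>y\<in>#L'. fst y > 0 \<and> snd y < r" using less.prems(1) LL by auto
      have p2: "\<forall>k t. (even k \<or> (even r \<and> odd t)) \<longrightarrow> even (count L' (k, t))"
      proof (intro allI impI)
        fix k' t' :: nat assume h: "even k' \<or> (even r \<and> odd t')"
        have "even (count L (k', t'))" using less.prems(2) h by blast
        then show "even (count L' (k', t'))" unfolding LL by (auto split: if_splits)
      qed
      obtain M' where M': "\<forall>x\<in>#M'. fst x > 0 \<and> snd x < r" "sum_mset (image_mset (sqf r) M') = L'"
        "sum_mset (image_mset fst M') = sum_mset (image_mset fst L')"
        using less.hyps[OF sz p1 p2] by blast
      have sq: "sqf r (2 * k, t) = {#x, x#}" by (simp add: sqf_def x)
      show ?thesis
      proof (intro exI[of _ "add_mset (2 * k, t) M'"] conjI)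
        show "\<forall>y\<in>#add_mset (2 * k, t) M'. fst y > 0 \<and> snd y < r" using M'(1) kt by simp
        show "sum_mset (image_mset (sqf r) (add_mset (2 * k, t) M')) = L"
          using sq M'(2) LL by simp
        show "sum_mset (image_mset fst (add_mset (2 * k, t) M')) = sum_mset (image_mset fst L)"
          using M'(3) LL x by simp
      qed
    next
      case False
      then have kodd: "odd k" and rt: "odd r \<or> even t" by auto
      obtain c where c: "c < r" "(2 * c) mod r = t"
      proof (cases "even t")
        case True
        then have "2 * (t div 2) = t" by simp
        then show ?thesis using that[of "t div 2"] kt by simp
      next
        case False
        then have "odd r" using rt by simp
        then have ev: "even (t + r)" using False by simp
        then have e2: "2 * ((t + r) div 2) = t + r" by simp
        have "(t + r) div 2 < r" using kt by simp
        moreover have "(2 * ((t + r) div 2)) mod r = t" using e2 kt by simp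
        ultimately show ?thesis using that by blast
      qed
      define L' where "L' = L - {#x#}"
      have LL: "L = add_mset x L'" unfolding L'_def using xL by simp
      have sz: "size L' < size L" unfolding LL by simp
      have p1: "\<forall>y\<in>#L'. fst y > 0 \<and> snd y < r" using less.prems(1) LL by auto
      have p2: "\<forall>k t. (even k \<or> (even r \<and> odd t)) \<longrightarrow> even (count L' (k, t))"
      proof (intro allI impI)
        fix k' t' :: nat assume h: "even k' \<or> (even r \<and> odd t')"
        then have "(k', t') \<noteq> x" using False x by auto
        moreover have "even (count L (k', t'))" using less.prems(2) h by blast
        ultimately show "even (count L' (k', t'))" unfolding LL by simp
      qed
      obtain M' where M': "\<forall>x\<in>#M'. fst x > 0 \<and> snd x < r" "sum_mset (image_mset (sqf r) M') = L'"
        "sum_mset (image_mset fst M') = sum_mset (image_mset fst L')"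
        using less.hyps[OF sz p1 p2] by blast
      have sq: "sqf r (k, c) = {#x#}" using kodd c x by (simp add: sqf_def)
      show ?thesis
      proof (intro exI[of _ "add_mset (k, c) M'"] conjI)
        show "\<forall>y\<in>#add_mset (k, c) M'. fst y > 0 \<and> snd y < r" using M'(1) kt c by simp
        show "sum_mset (image_mset (sqf r) (add_mset (k, c) M')) = L"
          using sq M'(2) LL by simp
        show "sum_mset (image_mset fst (add_mset (k, c) M')) = sum_mset (image_mset fst L)"
          using M'(3) LL x by simp
      qed
    qed
  qed
qed

lemma count_pair_img:
  "count (image_mset (\<lambda>k. (k, t)) N) (a, b) = (if b = t then count N a else 0)"
  by (induction N) auto

lemma count_L:
  assumes "finite A"
  shows "count (\<Sum>t\<in>A. image_mset (\<lambda>k. (k, t)) (lam t)) (a, b) = (if b \<in> A then count (lam b) a else 0)"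
  using assms
proof (induction A rule: finite_induct)
  case empty then show ?case by simp
next
  case (insert t F)
  then show ?case by (auto simp: count_pair_img)
qed

lemma mem_L:
  assumes "finite A" "y \<in># (\<Sum>t\<in>A. image_mset (\<lambda>k. (k, t)) (lam t))"
  shows "\<exists>t\<in>A. snd y = t \<and> fst y \<in># lam t"
  using assms
proof (induction A rule: finite_induct)
  case empty then show ?case by simp
next
  case (insert t F)
  then show ?case by auto
qed

lemma sumfst_L:
  assumes "finite A"
  shows "sum_mset (image_mset fst (\<Sum>t\<in>A. image_mset (\<lambda>k. (k, t)) (lam t))) = (\<Sum>t\<in>A. sum_mset (lam t))"
  using assms
proof (induction A rule: finite_induct)
  case empty then show ?case by simp
next
  case (insert t F)
  have "image_mset fst (image_mset (\<lambda>k. (k, t)) (lam t)) = lam t"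
    by (simp add: multiset.map_comp comp_def)
  then show ?case using insert by simp
qed

theorem proposition6p3:
  fixes r n :: nat and lam :: "nat \<Rightarrow> nat multiset"
  assumes "r \<ge> 1" and "r_partite_partition r n lam"
  shows "(\<exists>\<pi>\<in>gsym r n. \<forall>t<r. cycle_type r n (gmult r n \<pi> \<pi>) t = lam t)
    \<longleftrightarrow> ((\<forall>t<r. \<forall>k. even k \<longrightarrow> even (count (lam t) k))
        \<and> (even r \<longrightarrow> (\<forall>t<r. odd t \<longrightarrow> (\<forall>k. odd k \<longrightarrow> even (count (lam t) k)))))"
proof
  assume "\<exists>\<pi>\<in>gsym r n. \<forall>t<r. cycle_type r n (gmult r n \<pi> \<pi>) t = lam t"
  then obtain \<pi> where pi: "\<pi> \<in> gsym r n" and ct: "\<forall>t<r. cycle_type r n (gmult r n \<pi> \<pi>) t = lam t"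
    by blast
  have key: "\<And>t k. t < r \<Longrightarrow> (even k \<or> (even r \<and> odd t)) \<Longrightarrow> even (count (lam t) k)"
  proof -
    fix t k :: nat assume t: "t < r" and h: "even k \<or> (even r \<and> odd t)"
    have "count (lam t) k = count (CT r n (gmult r n \<pi> \<pi>)) (k, t)"
      using ct t ct_count by metis
    also have "\<dots> = count (sum_mset (image_mset (sqf r) (CT r n \<pi>))) (k, t)"
      using CT_sq[OF pi] by simp
    finally show "even (count (lam t) k)" using sqf_count_even[OF h] by simp
  qed
  show "(\<forall>t<r. \<forall>k. even k \<longrightarrow> even (count (lam t) k))
        \<and> (even r \<longrightarrow> (\<forall>t<r. odd t \<longrightarrow> (\<forall>k. odd k \<longrightarrow> even (count (lam t) k))))"
    using key by blast
next
  assume cond: "(\<forall>t<r. \<forall>k. even k \<longrightarrow> even (count (lam t) k))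
        \<and> (even r \<longrightarrow> (\<forall>t<r. odd t \<longrightarrow> (\<forall>k. odd k \<longrightarrow> even (count (lam t) k))))"
  define L where "L = (\<Sum>t\<in>{..<r}. image_mset (\<lambda>k. (k, t)) (lam t))"
  have cL: "\<And>a b. count L (a, b) = (if b < r then count (lam b) a else 0)"
    unfolding L_def using count_L[of "{..<r}" lam] by simp
  have rp: "\<forall>t<r. 0 \<notin># lam t" "(\<Sum>t<r. sum_mset (lam t)) = n"
    using assms(2) by (auto simp: r_partite_partition_def)
  have vL: "\<forall>x\<in>#L. fst x > 0 \<and> snd x < r"
  proof
    fix y assume "y \<in># L"
    then obtain t where "t < r" "snd y = t" "fst y \<in># lam t"
      using mem_L[of "{..<r}" y lam] unfolding L_def by auto
    then show "fst y > 0 \<and> snd y < r" using rp(1) by (metis gr0I)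
  qed
  have eL: "\<forall>k t. (even k \<or> (even r \<and> odd t)) \<longrightarrow> even (count L (k, t))"
  proof (intro allI impI)
    fix k t :: nat assume h: "even k \<or> (even r \<and> odd t)"
    show "even (count L (k, t))"
    proof (cases "t < r")
      case True
      have "even (count (lam t) k)"
      proof (cases "even k")
        case True then show ?thesis using cond \<open>t < r\<close> by blast
      next
        case False then show ?thesis using cond \<open>t < r\<close> h by blast
      qed
      then show ?thesis using cL True by simp
    next
      case False then show ?thesis using cL by simp
    qed
  qed
  have sL: "sum_mset (image_mset fst L) = n"
    unfolding L_def using sumfst_L[of "{..<r}" lam] rp(2) by simp
  obtain M where M: "\<forall>x\<in>#M. fst x > 0 \<and> snd x < r" "sum_mset (image_mset (sqf r) M) = L"
    "sum_mset (image_mset fst M) = sum_mset (image_mset fst L)"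
    using construct[OF assms(1) vL eL] by blast
  have sM: "sum_mset (image_mset fst M) = n" using M(3) sL by simp
  obtain \<pi> where pi: "\<pi> \<in> gsym r n" and ctp: "CT r n \<pi> = M"
    using exists_CT[OF M(1)] unfolding sM by blast
  have sq: "CT r n (gmult r n \<pi> \<pi>) = L" using CT_sq[OF pi] ctp M(2) by simp
  have "\<forall>t<r. cycle_type r n (gmult r n \<pi> \<pi>) t = lam t"
  proof (intro allI impI)
    fix t assume t: "t < r"
    show "cycle_type r n (gmult r n \<pi> \<pi>) t = lam t"
    proof (rule multiset_eqI)
      fix k show "count (cycle_type r n (gmult r n \<pi> \<pi>) t) k = count (lam t) k"
        using ct_count[of r n "gmult r n \<pi> \<pi>" t k] sq cL[of k t] t by simp
    qed
  qed
  then show "\<exists>\<pi>\<in>gsym r n. \<forall>t<r. cycle_type r n (gmult r n \<pi> \<pi>) t = lam t" using pi by blast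
qed

end
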